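(* In the setting below, for all distinct $i,j,k\in\mathbb Z/N\mathbb Z$ we have $\#(P_{ij}\cap Q^+_{jk})\leq2$.
   Context: Setting: $p,q$ distinct primes, $N=p+q$; $M=(m_{ik})_{i,k\in\mathbb Z/N\mathbb Z}$ has entries in $\mathbb Z/pq\mathbb Z$ and $(e^{2\pi i\,m_{ik}/pq})$ is a complex Hadamard matrix (unimodular entries, orthogonal rows). $L_i(k)=m_{ik}$, $L_{ij}=L_j-L_i$. For $d\mid pq$, $d(\mathbb Z/pq\mathbb Z)$ is the subgroup of multiples of $d$. For distinct $i,j$ there is a partition $\mathbb Z/N\mathbb Z=P_{ij}\sqcup Q_{ij}\sqcup R_{ij}$ and $r\in\mathbb Z/pq\mathbb Z$ with: $\#R_{ij}=2$ and $L_{ij}\equiv r$ on $R_{ij}$; $\#P_{ij}=p-1$ and $L_{ij}(P_{ij})=(r+q(\mathbb Z/pq\mathbb Z))\setminus\{r\}$; $\#Q_{ij}=q-1$ and $L_{ij}(Q_{ij})=(r+p(\mathbb Z/pq\mathbb Z))\setminus\{r\}$. This partition is unique ($R_{ij}$ is the pair of indices where $L_{ij}$ takes its unique repeated value). Put $P^+_{ij}=P_{ij}\cup R_{ij}$, $Q^+_{ij}=Q_{ij}\cup R_{ij}$. *)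

theory Defs
  imports "HOL-Analysis.Analysis" "HOL-Number_Theory.Cong"
begin

(* Indices Z/NZ are represented by {..<N}; entries of M are integers read modulo p*q. *)

definition Ldiff :: "(nat \<Rightarrow> nat \<Rightarrow> int) \<Rightarrow> nat \<Rightarrow> nat \<Rightarrow> nat \<Rightarrow> nat \<Rightarrow> nat \<Rightarrow> int" where
  "Ldiff M p q i j k = (M j k - M i k) mod (int (p * q))"

definition is_hadamard :: "(nat \<Rightarrow> nat \<Rightarrow> int) \<Rightarrow> nat \<Rightarrow> nat \<Rightarrow> nat \<Rightarrow> bool" where
  "is_hadamard M p q N \<longleftrightarrow>
     (\<forall>i<N. \<forall>j<N. i \<noteq> j \<longrightarrow>
        (\<Sum>k<N. exp (2 * pi * \<i> * of_int (M i k) / of_nat (p * q))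
                 * cnj (exp (2 * pi * \<i> * of_int (M j k) / of_nat (p * q)))) = 0)"

definition part_data :: "(nat \<Rightarrow> nat \<Rightarrow> int) \<Rightarrow> nat \<Rightarrow> nat \<Rightarrow> nat \<Rightarrow> nat \<Rightarrow> nat
    \<Rightarrow> nat set \<Rightarrow> nat set \<Rightarrow> nat set \<Rightarrow> int \<Rightarrow> bool" where
  "part_data M p q N i j P Q R r \<longleftrightarrow>
     P \<union> Q \<union> R = {..<N} \<and> P \<inter> Q = {} \<and> P \<inter> R = {} \<and> Q \<inter> R = {} \<and>
     r \<in> {0..<int (p*q)} \<and>
     card R = 2 \<and> (\<forall>k\<in>R. Ldiff M p q i j k = r) \<and>
     card P = p - 1 \<and>
     Ldiff M p q i j ` P = {x \<in> {0..<int (p*q)}. [x = r] (mod int q)} - {r} \<and>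
     card Q = q - 1 \<and>
     Ldiff M p q i j ` Q = {x \<in> {0..<int (p*q)}. [x = r] (mod int p)} - {r}"

definition Pset where
  "Pset M p q N i j = (THE P. \<exists>Q R r. part_data M p q N i j P Q R r)"
definition Qset where
  "Qset M p q N i j = (THE Q. \<exists>P R r. part_data M p q N i j P Q R r)"
definition Rset where
  "Rset M p q N i j = (THE R. \<exists>P Q r. part_data M p q N i j P Q R r)"

definition Qplus where
  "Qplus M p q N i j = Qset M p q N i j \<union> Rset M p q N i j"

end

theory Submission
  imports Defs
begin


lemma crt_eq:
  fixes p q :: nat and x y :: int
  assumes "prime p" "prime q" "p \<noteq> q"
    and "x \<in> {0..<int (p*q)}" "y \<in> {0..<int (p*q)}"
    and "[x = y] (mod int p)" "[x = y] (mod int q)"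
  shows "x = y"
proof -
  have "coprime p q" using assms by (simp add: primes_coprime)
  hence "coprime (int p) (int q)" by simp
  hence "[x = y] (mod int p * int q)" using assms coprime_cong_mult by blast
  thus ?thesis using assms cong_less_imp_eq_int by auto
qed

lemma resclass:
  fixes p q :: nat and r :: int
  assumes "p > 0" "q > 0"
  shows "{x \<in> {0..<int (p*q)}. [x = r] (mod int q)} = (\<lambda>t. r mod q + int q * t) ` {0..<int p}"
proof (rule set_eqI, rule iffI)
  fix x assume x: "x \<in> {x \<in> {0..<int (p*q)}. [x = r] (mod int q)}"
  hence "x mod q = r mod q" by (simp add: cong_def)
  hence e: "x = r mod q + int q * (x div q)" by (metis mult_div_mod_eq add.commute)
  have d: "int q * (x div int q) + x mod int q = x" by (rule mult_div_mod_eq)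
  have "x mod int q \<ge> 0" using assms by simp
  moreover have "x < int q * int p" using x by (simp add: mult.commute)
  ultimately have "int q * (x div int q) < int q * int p" using d by linarith
  hence "x div q < p" using assms by (simp add: mult_less_cancel_left)
  moreover have "x div q \<ge> 0" using x assms by (simp add: pos_imp_zdiv_nonneg_iff)
  ultimately show "x \<in> (\<lambda>t. r mod q + int q * t) ` {0..<int p}" using e by force
next
  fix x assume "x \<in> (\<lambda>t. r mod q + int q * t) ` {0..<int p}"
  then obtain t where t: "t \<in> {0..<int p}" "x = r mod q + int q * t" by auto
  have r0: "r mod q < q" "r mod q \<ge> 0" using assms by auto
  moreover have "int q * t \<le> int q * (int p - 1)" using t assms by (intro mult_left_mono) auto
  ultimately have "x < int (p*q)" using t by (simp add: algebra_simps)
  moreover have "[x = r] (mod int q)" using t by (simp add: cong_def)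
  moreover have "x \<ge> 0" using t r0 by simp
  ultimately show "x \<in> {x \<in> {0..<int (p*q)}. [x = r] (mod int q)}" by auto
qed

lemma resclass_card:
  fixes p q :: nat and r :: int
  assumes "p > 0" "q > 0"
  shows "card {x \<in> {0..<int (p*q)}. [x = r] (mod int q)} = p"
proof -
  have "inj_on (\<lambda>t. r mod q + int q * t) {0..<int p}" using assms by (auto simp: inj_on_def)
  thus ?thesis unfolding resclass[OF assms] by (simp add: card_image)
qed


lemma sum_range_dvd:
  fixes p :: nat assumes "odd p"
  shows "int p dvd (\<Sum>t\<in>{0..<int p}. t)"
proof -
  have p1: "p \<ge> 1" using assms by (cases p) auto
  have "{0..<int p} = int ` {0..<p}" by (simp add: image_int_atLeastLessThan)
  hence e: "(\<Sum>t\<in>{0..<int p}. t) = (\<Sum>i\<in>{0..<p}. int i)" by (simp add: sum.reindex)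
  have "{0..<p} = {0..p-1}" using p1 by auto
  hence "2 * (\<Sum>i\<in>{0..<p}. int i) = int (p-1) * (int (p-1) + 1)"
    using double_gauss_sum[of "p-1", where 'a=int] by simp
  also have "\<dots> = int p * (int p - 1)" using p1 by (simp add: of_nat_diff)
  finally have "int p dvd 2 * (\<Sum>t\<in>{0..<int p}. t)" using e by simp
  moreover have "coprime (int p) 2" using assms by (simp add: coprime_commute)
  ultimately show ?thesis using coprime_dvd_mult_right_iff by blast
qed

lemma pd_basic:
  fixes p q :: nat
  assumes pr: "prime p" "prime q" "p \<noteq> q"
    and pd: "part_data M p q N i j P Q R r"
  shows "P \<subseteq> {..<N}" "Q \<subseteq> {..<N}" "R \<subseteq> {..<N}"
    "inj_on (Ldiff M p q i j) P" "inj_on (Ldiff M p q i j) Q"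
    "\<forall>x\<in>P. Ldiff M p q i j x \<noteq> r \<and> [Ldiff M p q i j x = r] (mod int q)"
    "\<forall>x\<in>Q. Ldiff M p q i j x \<noteq> r \<and> [Ldiff M p q i j x = r] (mod int p)"
    "\<forall>x\<in>R. Ldiff M p q i j x = r"
    "\<forall>x\<in>P. \<forall>y\<in>Q. Ldiff M p q i j x \<noteq> Ldiff M p q i j y"
    "r \<in> {0..<int (p*q)}" "card R = 2" "card P = p - 1" "card Q = q - 1"
    "P \<inter> Q = {}" "P \<inter> R = {}" "Q \<inter> R = {}" "P \<union> Q \<union> R = {..<N}"
proof -
  let ?L = "Ldiff M p q i j"
  have p0: "p > 0" "q > 0" using pr prime_gt_0_nat by auto
  note d = pd[unfolded part_data_def]
  show PQR: "P \<subseteq> {..<N}" "Q \<subseteq> {..<N}" "R \<subseteq> {..<N}" using d by auto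
  show "r \<in> {0..<int (p*q)}" "card R = 2" "card P = p - 1" "card Q = q - 1"
    "P \<inter> Q = {}" "P \<inter> R = {}" "Q \<inter> R = {}" "P \<union> Q \<union> R = {..<N}"
    "\<forall>x\<in>R. ?L x = r" using d by auto
  have rV: "r \<in> {x \<in> {0..<int (p*q)}. [x = r] (mod int q)}" using d by auto
  have rW: "r \<in> {x \<in> {0..<int (q*p)}. [x = r] (mod int p)}" using d by (auto simp: mult.commute)
  have cV: "card ({x \<in> {0..<int (p*q)}. [x = r] (mod int q)} - {r}) = p - 1"
    using rV resclass_card[OF p0] by (simp add: card_Diff_singleton)
  have cW: "card ({x \<in> {0..<int (q*p)}. [x = r] (mod int p)} - {r}) = q - 1"
    using rW resclass_card[of q p r] p0 by (simp add: card_Diff_singleton)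
  have fP: "finite P" "finite Q" using PQR by (meson finite_lessThan finite_subset)+
  show "inj_on ?L P" using d cV fP by (intro eq_card_imp_inj_on) auto
  show "inj_on ?L Q" using d cW fP by (intro eq_card_imp_inj_on) (auto simp: mult.commute)
  have imP: "?L ` P = {x \<in> {0..<int (p*q)}. [x = r] (mod int q)} - {r}" using d by auto
  have imQ: "?L ` Q = {x \<in> {0..<int (p*q)}. [x = r] (mod int p)} - {r}" using d by auto
  show A: "\<forall>x\<in>P. ?L x \<noteq> r \<and> [?L x = r] (mod int q)" using imP by auto
  show B: "\<forall>x\<in>Q. ?L x \<noteq> r \<and> [?L x = r] (mod int p)" using imQ by auto
  show "\<forall>x\<in>P. \<forall>y\<in>Q. ?L x \<noteq> ?L y"
  proof (intro ballI)
    fix x y assume x: "x \<in> P" and y: "y \<in> Q"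
    show "?L x \<noteq> ?L y"
    proof
      assume e: "?L x = ?L y"
      have "?L x = r"
      proof (rule crt_eq[OF pr])
        show "?L x \<in> {0..<int (p*q)}" using imP x by auto
        show "r \<in> {0..<int (p*q)}" using d by auto
        show "[?L x = r] (mod int p)" using e B y by auto
        show "[?L x = r] (mod int q)" using A x by auto
      qed
      thus False using A x by auto
    qed
  qed
qed

lemma pd_fiber:
  fixes p q :: nat
  assumes pr: "prime p" "prime q" "p \<noteq> q"
    and pd: "part_data M p q N i j P Q R r"
  shows "v = r \<Longrightarrow> {k. k < N \<and> Ldiff M p q i j k = v} = R"
    and "v \<noteq> r \<Longrightarrow> card {k. k < N \<and> Ldiff M p q i j k = v} \<le> 1"
    and "card {k. k < N \<and> Ldiff M p q i j k = v} \<le> 2"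
proof -
  let ?L = "Ldiff M p q i j"
  let ?F = "{k. k < N \<and> ?L k = v}"
  note b = pd_basic[OF pr pd]
  have fin: "finite ?F" by simp
  show eq: "v = r \<Longrightarrow> ?F = R"
  proof -
    assume v: "v = r"
    show "?F = R"
    proof
      show "?F \<subseteq> R"
      proof
        fix k assume k: "k \<in> ?F"
        hence "k \<in> P \<union> Q \<union> R" using b(17) by auto
        thus "k \<in> R" using k v b(6,7) by auto
      qed
      show "R \<subseteq> ?F" using b(3,8) v by auto
    qed
  qed
  show le1: "v \<noteq> r \<Longrightarrow> card ?F \<le> 1"
  proof -
    assume v: "v \<noteq> r"
    have "\<forall>a\<in>?F. \<forall>c\<in>?F. a = c"
    proof (intro ballI)
      fix a c assume a: "a \<in> ?F" and c: "c \<in> ?F"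
      have a': "a \<in> P \<union> Q" using a b(17,8) v by auto
      have c': "c \<in> P \<union> Q" using c b(17,8) v by auto
      have e: "?L a = ?L c" using a c by simp
      show "a = c"
        using a' c' e b(4,5,9) by (auto simp: inj_on_def) (metis)+
    qed
    thus "card ?F \<le> 1" using card_le_Suc0_iff_eq[OF fin] by simp
  qed
  show "card ?F \<le> 2"
  proof (cases "v = r")
    case True thus ?thesis using eq b(11) by simp
  next
    case False thus ?thesis using le1 by simp
  qed
qed

lemma pd_unique_r:
  fixes p q :: nat
  assumes pr: "prime p" "prime q" "p \<noteq> q"
    and pd: "part_data M p q N i j P Q R r"
    and pd': "part_data M p q N i j P' Q' R' r'"
  shows "r' = r"
proof (rule ccontr)
  assume "r' \<noteq> r"
  hence "card {k. k < N \<and> Ldiff M p q i j k = r} \<le> 1" using pd_fiber(2)[OF pr pd'] by simp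
  moreover have "card {k. k < N \<and> Ldiff M p q i j k = r} = 2"
    using pd_fiber(1)[OF pr pd, of r] pd_basic(11)[OF pr pd] by simp
  ultimately show False by simp
qed

lemma pd_charP:
  fixes p q :: nat
  assumes pr: "prime p" "prime q" "p \<noteq> q"
    and pd: "part_data M p q N i j P Q R r"
  shows "P = {k. k < N \<and> Ldiff M p q i j k \<noteq> r \<and> [Ldiff M p q i j k = r] (mod int q)}"
    and "Q = {k. k < N \<and> Ldiff M p q i j k \<noteq> r \<and> [Ldiff M p q i j k = r] (mod int p)}"
    and "R = {k. k < N \<and> Ldiff M p q i j k = r}"
proof -
  let ?L = "Ldiff M p q i j"
  note b = pd_basic[OF pr pd]
  have p0: "p * q > 0" using pr prime_gt_0_nat by auto
  have rng: "\<And>k. ?L k \<in> {0..<int (p*q)}" using p0 by (simp add: Ldiff_def)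
  have nb: "\<And>k. [?L k = r] (mod int p) \<Longrightarrow> [?L k = r] (mod int q) \<Longrightarrow> ?L k = r"
    using crt_eq[OF pr] rng b(10) by blast
  show "R = {k. k < N \<and> ?L k = r}" using pd_fiber(1)[OF pr pd, of r] by simp
  show "P = {k. k < N \<and> ?L k \<noteq> r \<and> [?L k = r] (mod int q)}" (is "_ = ?S")
  proof
    show "P \<subseteq> ?S" using b(1,6) by auto
    show "{k. k < N \<and> ?L k \<noteq> r \<and> [?L k = r] (mod int q)} \<subseteq> P"
    proof
      fix k assume k: "k \<in> {k. k < N \<and> ?L k \<noteq> r \<and> [?L k = r] (mod int q)}"
      hence "k \<in> P \<union> Q \<union> R" using b(17) by auto
      thus "k \<in> P" using k b(7,8) nb by auto
    qed
  qed
  show "Q = {k. k < N \<and> ?L k \<noteq> r \<and> [?L k = r] (mod int p)}" (is "_ = ?S")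
  proof
    show "Q \<subseteq> ?S" using b(2,7) by auto
    show "{k. k < N \<and> ?L k \<noteq> r \<and> [?L k = r] (mod int p)} \<subseteq> Q"
    proof
      fix k assume k: "k \<in> {k. k < N \<and> ?L k \<noteq> r \<and> [?L k = r] (mod int p)}"
      hence "k \<in> P \<union> Q \<union> R" using b(17) by auto
      thus "k \<in> Q" using k b(6,8) nb by auto
    qed
  qed
qed

lemma pd_sets:
  fixes p q :: nat
  assumes pr: "prime p" "prime q" "p \<noteq> q"
    and pd: "part_data M p q N i j P Q R r"
  shows "Pset M p q N i j = P" "Qset M p q N i j = Q" "Rset M p q N i j = R"
proof -
  have u: "P' = P \<and> Q' = Q \<and> R' = R" if "part_data M p q N i j P' Q' R' r'" for P' Q' R' r'
  proof -
    have "r' = r" using pd_unique_r[OF pr pd that] .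
    thus ?thesis using pd_charP[OF pr pd] pd_charP[OF pr that] by simp
  qed
  show "Pset M p q N i j = P" unfolding Pset_def
    by (rule the_equality) (use pd u in blast)+
  show "Qset M p q N i j = Q" unfolding Qset_def
    by (rule the_equality) (use pd u in blast)+
  show "Rset M p q N i j = R" unfolding Rset_def
    by (rule the_equality) (use pd u in blast)+
qed

lemma pd_sum:
  fixes p q :: nat
  assumes pr: "prime p" "prime q" "p \<noteq> q" and odd: "odd p"
    and pd: "part_data M p q N i j P Q R r"
  shows "[(\<Sum>k<N. Ldiff M p q i j k) = int q * r] (mod int p)"
proof -
  let ?L = "Ldiff M p q i j"
  note b = pd_basic[OF pr pd]
  have p0: "p > 0" "q > 0" using pr prime_gt_0_nat by auto
  have fin: "finite P" "finite Q" "finite R" using b(1-3) by (meson finite_lessThan finite_subset)+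
  have "(\<Sum>k<N. ?L k) = (\<Sum>k\<in>P \<union> Q \<union> R. ?L k)" using b(17) by simp
  also have "\<dots> = (\<Sum>k\<in>P. ?L k) + (\<Sum>k\<in>Q. ?L k) + (\<Sum>k\<in>R. ?L k)"
    using fin b(14-16) by (simp add: sum.union_disjoint Int_Un_distrib2)
  finally have split: "(\<Sum>k<N. ?L k) = (\<Sum>k\<in>P. ?L k) + (\<Sum>k\<in>Q. ?L k) + (\<Sum>k\<in>R. ?L k)" .
  have sR: "(\<Sum>k\<in>R. ?L k) = 2 * r" using b(8,11) by simp
  have "[(\<Sum>k\<in>Q. ?L k) = (\<Sum>k\<in>Q. r)] (mod int p)" using b(7) by (intro cong_sum) auto
  hence sQ: "[(\<Sum>k\<in>Q. ?L k) = (int q - 1) * r] (mod int p)" using b(13) p0 by (simp add: of_nat_diff)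
  let ?V = "{x \<in> {0..<int (p*q)}. [x = r] (mod int q)}"
  have imP: "?L ` P = ?V - {r}" using pd unfolding part_data_def by auto
  have "(\<Sum>k\<in>P. ?L k) = (\<Sum>x\<in>?L ` P. x)" using b(4) by (simp add: sum.reindex)
  also have "\<dots> = (\<Sum>x\<in>?V. x) - r"
  proof -
    have fV: "finite ?V" by (rule finite_subset[of _ "{0..<int (p*q)}"]) auto
    have "r \<in> ?V" using b(10) by simp
    thus ?thesis unfolding imP using sum_diff1[OF fV, of "\<lambda>x. x" r] by simp
  qed
  finally have sP: "(\<Sum>k\<in>P. ?L k) = (\<Sum>x\<in>?V. x) - r" .
  have "(\<Sum>x\<in>?V. x) = (\<Sum>x\<in>(\<lambda>t. r mod q + int q * t) ` {0..<int p}. x)"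
    unfolding resclass[OF p0] ..
  also have "\<dots> = (\<Sum>t\<in>{0..<int p}. r mod q + int q * t)"
    using p0 by (subst sum.reindex) (auto simp: inj_on_def)
  also have "\<dots> = int p * (r mod q) + int q * (\<Sum>t\<in>{0..<int p}. t)"
    by (simp add: sum.distrib sum_distrib_left)
  finally have "int p dvd (\<Sum>x\<in>?V. x)" using sum_range_dvd[OF odd] by simp
  hence sV: "[(\<Sum>x\<in>?V. x) = 0] (mod int p)" by (simp add: cong_0_iff)
  have "[(\<Sum>k<N. ?L k) = (0 - r) + (int q - 1) * r + 2 * r] (mod int p)"
    unfolding split sP sR by (intro cong_add sQ cong_diff sV cong_refl)
  moreover have "(0 - r) + (int q - 1) * r + 2 * r = int q * r" by (simp add: algebra_simps)
  ultimately show ?thesis by simp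
qed

lemma cong_lin4:
  fixes a1 b1 a2 b2 a3 b3 a4 b4 e f m :: int
  assumes "[a1 = b1] (mod m)" "[a2 = b2] (mod m)" "[a3 = b3] (mod m)" "[a4 = b4] (mod m)"
    and "e - f = (a1 - b1) + (a2 - b2) + (a3 - b3) + (a4 - b4)"
  shows "[e = f] (mod m)"
  using assms unfolding cong_iff_dvd_diff by (simp add: dvd_add)

lemma ld_add:
  "[Ldiff M p q i k x = Ldiff M p q i j x + Ldiff M p q j k x] (mod int (p*q))"
proof -
  have "M k x - M i x = (M j x - M i x) + (M k x - M j x)" by simp
  hence "(M k x - M i x) mod int (p*q) = ((M j x - M i x) mod int (p*q) + (M k x - M j x) mod int (p*q)) mod int (p*q)"
    by (metis mod_add_eq)
  thus ?thesis unfolding Ldiff_def cong_def by simp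
qed

theorem lemma6p3:
  fixes p q N :: nat and M :: "nat \<Rightarrow> nat \<Rightarrow> int" and i j k :: nat
  assumes "prime p" and "prime q" and "p \<noteq> q" and "N = p + q"
    and "is_hadamard M p q N"
    and "\<forall>a<N. \<forall>b<N. a \<noteq> b \<longrightarrow> (\<exists>P Q R r. part_data M p q N a b P Q R r)"
    and "i < N" and "j < N" and "k < N"
    and "i \<noteq> j" and "j \<noteq> k" and "i \<noteq> k"
  shows "card (Pset M p q N i j \<inter> Qplus M p q N j k) \<le> 2"
proof -
  let ?L1 = "Ldiff M p q i j" and ?L2 = "Ldiff M p q j k" and ?L3 = "Ldiff M p q i k"
  have pr: "prime p" "prime q" "p \<noteq> q" using assms by auto
  obtain P1 Q1 R1 r1 where d1: "part_data M p q N i j P1 Q1 R1 r1" using assms by blast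
  obtain P2 Q2 R2 r2 where d2: "part_data M p q N j k P2 Q2 R2 r2" using assms by blast
  obtain P3 Q3 R3 r3 where d3: "part_data M p q N i k P3 Q3 R3 r3" using assms by blast
  note b1 = pd_basic[OF pr d1] and b2 = pd_basic[OF pr d2] and b3 = pd_basic[OF pr d3]
  have e: "Pset M p q N i j \<inter> Qplus M p q N j k = P1 \<inter> (Q2 \<union> R2)"
    unfolding Qplus_def using pd_sets[OF pr d1] pd_sets[OF pr d2] by simp
  have finP1: "finite P1" using b1(1) by (meson finite_lessThan finite_subset)
  have pq0: "p * q > 0" using pr prime_gt_0_nat by auto
  have rng: "\<And>a b x. Ldiff M p q a b x \<in> {0..<int (p*q)}" using pq0 by (simp add: Ldiff_def)
  have "card (P1 \<inter> (Q2 \<union> R2)) \<le> 2"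
  proof (cases "p \<le> 3")
    case True
    have "card (P1 \<inter> (Q2 \<union> R2)) \<le> card P1" using finP1 by (intro card_mono) auto
    thus ?thesis using b1(12) True by simp
  next
    case False
    hence odd: "odd p" using pr prime_odd_nat by auto
    have dp: "int p dvd int (p*q)" "int q dvd int (p*q)" by simp_all
    have addp: "\<And>x. [?L3 x = ?L1 x + ?L2 x] (mod int p)"
      using ld_add cong_dvd_modulus dp(1) by blast
    have addq: "\<And>x. [?L3 x = ?L1 x + ?L2 x] (mod int q)"
      using ld_add cong_dvd_modulus dp(2) by blast
    have s1: "[(\<Sum>x<N. ?L1 x) = int q * r1] (mod int p)" using pd_sum[OF pr odd d1] .
    have s2: "[(\<Sum>x<N. ?L2 x) = int q * r2] (mod int p)" using pd_sum[OF pr odd d2] .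
    have s3: "[(\<Sum>x<N. ?L3 x) = int q * r3] (mod int p)" using pd_sum[OF pr odd d3] .
    have sa: "[(\<Sum>x<N. ?L3 x) = (\<Sum>x<N. ?L1 x) + (\<Sum>x<N. ?L2 x)] (mod int p)"
      unfolding sum.distrib[symmetric] by (intro cong_sum addp)
    have "[int q * r3 = int q * (r1 + r2)] (mod int p)"
      by (rule cong_lin4[OF cong_sym[OF s3] sa s1 s2]) (simp add: algebra_simps)
    moreover have "coprime (int q) (int p)" using pr by (simp add: primes_coprime)
    ultimately have r3: "[r3 = r1 + r2] (mod int p)" using cong_mult_lcancel by blast
    have key: "x < N \<and> [?L2 x = r2] (mod int p) \<and> [?L2 x = r3 - r1] (mod int q)"
      if x: "x \<in> P1 \<inter> (Q2 \<union> R2)" for x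
    proof -
      have xN: "x < N" using x b1(1) by auto
      have h1: "?L1 x \<noteq> r1" "[?L1 x = r1] (mod int q)" using x b1(6) by auto
      have h2: "[?L2 x = r2] (mod int p)" using x b2(7,8) by auto
      have n1: "\<not> [?L1 x = r1] (mod int p)"
        using h1 crt_eq[OF pr rng b1(10)] by blast
      have n3: "\<not> [?L3 x = r3] (mod int p)"
      proof
        assume c: "[?L3 x = r3] (mod int p)"
        have "[?L1 x = r1] (mod int p)"
          by (rule cong_lin4[OF cong_sym[OF addp] c r3 cong_sym[OF h2]]) (simp add: algebra_simps)
        thus False using n1 by simp
      qed
      have "x \<in> P3 \<union> Q3 \<union> R3" using xN b3(17) by auto
      hence "x \<in> P3" using n3 b3(7,8) by auto
      hence c3: "[?L3 x = r3] (mod int q)" using b3(6) by auto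
      have "[?L2 x = r3 - r1] (mod int q)"
        by (rule cong_lin4[OF cong_sym[OF addq] c3 cong_sym[OF h1(2)] cong_refl[of 0]])
          (simp add: algebra_simps)
      thus ?thesis using xN h2 by simp
    qed
    show ?thesis
    proof (cases "P1 \<inter> (Q2 \<union> R2) = {}")
      case True thus ?thesis by simp
    next
      case False
      then obtain x0 where x0: "x0 \<in> P1 \<inter> (Q2 \<union> R2)" by blast
      have sub: "P1 \<inter> (Q2 \<union> R2) \<subseteq> {k. k < N \<and> ?L2 k = ?L2 x0}"
      proof
        fix x assume x: "x \<in> P1 \<inter> (Q2 \<union> R2)"
        have "?L2 x = ?L2 x0"
        proof (rule crt_eq[OF pr rng rng])
          show "[?L2 x = ?L2 x0] (mod int p)" using key[OF x] key[OF x0] by (meson cong_sym cong_trans)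
          show "[?L2 x = ?L2 x0] (mod int q)" using key[OF x] key[OF x0] by (meson cong_sym cong_trans)
        qed
        thus "x \<in> {k. k < N \<and> ?L2 k = ?L2 x0}" using key[OF x] by simp
      qed
      have "card (P1 \<inter> (Q2 \<union> R2)) \<le> card {k. k < N \<and> ?L2 k = ?L2 x0}"
        by (rule card_mono) (simp_all add: sub)
      also have "\<dots> \<le> 2" using pd_fiber(3)[OF pr d2] .
      finally show ?thesis .
    qed
  qed
  thus ?thesis using e by simp
qed

end
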